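(* Let $v$ be an equilibrium in the interior of $\Delta$ (all coordinates positive) which is different from the center $(1/N,\dots,1/N)$. Then the set $\{v_i: i\le N\}$ has exactly two elements.
   Context: Let $N\ge3$, $\alpha>1$, and $A_{i,j}=1-\delta_{i,j}$ for $i,j\le N$. Let $\Delta=\{v\in\mathbb R_+^N:\sum_iv_i=1,\ v_i\le3/4\ \forall i\}$. For $v\in\Delta$ let $v^\alpha=(v_i^\alpha)_i$, $H(v)=\sum_{i\neq j}v_i^\alpha v_j^\alpha$, $\pi_i(v)=v_i^\alpha(Av^\alpha)_i/H(v)$, and $F(v)=-v+\pi(v)$. An equilibrium is $v\in\Delta$ with $F(v)=0$. *)

theory Defs
  imports "HOL-Analysis.Analysis"
begin

text \<open>Vectors in R^N are functions nat => real, indices 0..N-1.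
  A i j = 1 - delta i j, so (A w)_i = sum over j different from i of w_j.\<close>

definition simplex_D :: "nat \<Rightarrow> (nat \<Rightarrow> real) set" where
  "simplex_D N = {v. (\<forall>i<N. 0 \<le> v i \<and> v i \<le> 3/4) \<and> (\<Sum>i<N. v i) = 1}"

definition Amat :: "nat \<Rightarrow> nat \<Rightarrow> real" where
  "Amat i j = (if i = j then 0 else 1)"

definition vpow :: "real \<Rightarrow> (nat \<Rightarrow> real) \<Rightarrow> nat \<Rightarrow> real" where
  "vpow \<alpha> v i = v i powr \<alpha>"

definition Hfun :: "nat \<Rightarrow> real \<Rightarrow> (nat \<Rightarrow> real) \<Rightarrow> real" where
  "Hfun N \<alpha> v = (\<Sum>i<N. \<Sum>j<N. if i \<noteq> j then vpow \<alpha> v i * vpow \<alpha> v j else 0)"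

definition pifun :: "nat \<Rightarrow> real \<Rightarrow> (nat \<Rightarrow> real) \<Rightarrow> nat \<Rightarrow> real" where
  "pifun N \<alpha> v i = vpow \<alpha> v i * (\<Sum>j<N. Amat i j * vpow \<alpha> v j) / Hfun N \<alpha> v"

definition Ffun :: "nat \<Rightarrow> real \<Rightarrow> (nat \<Rightarrow> real) \<Rightarrow> nat \<Rightarrow> real" where
  "Ffun N \<alpha> v i = - v i + pifun N \<alpha> v i"

definition equilibrium :: "nat \<Rightarrow> real \<Rightarrow> (nat \<Rightarrow> real) \<Rightarrow> bool" where
  "equilibrium N \<alpha> v \<longleftrightarrow> v \<in> simplex_D N \<and> (\<forall>i<N. Ffun N \<alpha> v i = 0)"

end

theory Submission
  imports Defs
begin

lemma hderiv:
  fixes S \<alpha> x :: real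
  assumes "x > 0"
  shows "((\<lambda>x. S * x powr (\<alpha>-1) - x powr (2*\<alpha>-1)) has_real_derivative
     (S * ((\<alpha>-1) * x powr (\<alpha>-1-1)) - (2*\<alpha>-1) * x powr (2*\<alpha>-1-1))) (at x)"
  using assms by (auto intro!: derivative_eq_intros has_real_derivative_powr)

lemma hcrit:
  fixes S \<alpha> a b :: real
  assumes "\<alpha> > 1" "0 < a" "a < b"
    and "S * ((\<alpha>-1) * a powr (\<alpha>-1-1)) - (2*\<alpha>-1) * a powr (2*\<alpha>-1-1) = 0"
    and "S * ((\<alpha>-1) * b powr (\<alpha>-1-1)) - (2*\<alpha>-1) * b powr (2*\<alpha>-1-1) = 0"
  shows False
proof -
  have key: "S * (\<alpha>-1) = (2*\<alpha>-1) * x powr \<alpha>"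
    if x: "x > 0" "S * ((\<alpha>-1) * x powr (\<alpha>-1-1)) - (2*\<alpha>-1) * x powr (2*\<alpha>-1-1) = 0" for x :: real
  proof -
    have e: "x powr (2*\<alpha>-1-1) = x powr (\<alpha>-1-1) * x powr \<alpha>"
      by (simp add: powr_add[symmetric])
    have p: "x powr (\<alpha>-1-1) > 0" using x by simp
    from x(2) have "x powr (\<alpha>-1-1) * (S * (\<alpha>-1) - (2*\<alpha>-1) * x powr \<alpha>) = 0"
      unfolding e by (simp add: algebra_simps)
    with p show ?thesis by simp
  qed
  have "a powr \<alpha> < b powr \<alpha>" using assms by (intro powr_less_mono2) auto
  moreover have "S * (\<alpha>-1) = (2*\<alpha>-1) * a powr \<alpha>" using assms(2) by (rule key[OF _ assms(4)])
  moreover have "S * (\<alpha>-1) = (2*\<alpha>-1) * b powr \<alpha>" using assms(2,3) by (intro key[OF _ assms(5)]) simp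
  ultimately show False using assms(1) by simp
qed

lemma three_roots:
  fixes S \<alpha> a b c H :: real
  assumes "\<alpha> > 1" "0 < a" "a < b" "b < c"
    and "S * a powr (\<alpha>-1) - a powr (2*\<alpha>-1) = H"
    and "S * b powr (\<alpha>-1) - b powr (2*\<alpha>-1) = H"
    and "S * c powr (\<alpha>-1) - c powr (2*\<alpha>-1) = H"
  shows False
proof -
  define h where "h = (\<lambda>x::real. S * x powr (\<alpha>-1) - x powr (2*\<alpha>-1))"
  define h' where "h' = (\<lambda>x::real. S * ((\<alpha>-1) * x powr (\<alpha>-1-1)) - (2*\<alpha>-1) * x powr (2*\<alpha>-1-1))"
  have D: "\<And>x. x > 0 \<Longrightarrow> (h has_real_derivative h' x) (at x)"
    unfolding h_def h'_def by (rule hderiv)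
  have rolle: "\<exists>z. p < z \<and> z < q \<and> h' z = 0" if pq: "0 < p" "p < q" "h p = h q" for p q
  proof -
    have "continuous_on {p..q} h"
      using D that by (intro continuous_at_imp_continuous_on) (metis D DERIV_isCont less_le_trans atLeastAtMost_iff)
    moreover have "\<And>x. p < x \<Longrightarrow> x < q \<Longrightarrow> h differentiable (at x)"
      using D that real_differentiable_def by (metis less_trans)
    ultimately obtain z where z: "p < z" "z < q" "DERIV h z :> 0"
      using Rolle[of p q h] pq by blast
    have "h' z = 0" using DERIV_unique[OF D z(3)] z that by simp
    with z show ?thesis by blast
  qed
  obtain z1 where z1: "a < z1" "z1 < b" "h' z1 = 0" using rolle[of a b] assms unfolding h_def by auto
  obtain z2 where z2: "b < z2" "z2 < c" "h' z2 = 0" using rolle[of b c] assms unfolding h_def by auto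
  show False using hcrit[of \<alpha> z1 z2 S] z1 z2 assms unfolding h'_def by auto
qed

theorem lemma4p3:
  fixes N :: nat and \<alpha> :: real and v :: "nat \<Rightarrow> real"
  assumes "N \<ge> 3" and "\<alpha> > 1"
    and "equilibrium N \<alpha> v"
    and "\<forall>i<N. v i > 0"
    and "\<exists>i<N. v i \<noteq> 1 / real N"
  shows "card (v ` {..<N}) = 2"
proof -
  define w where "w = (\<lambda>i. v i powr \<alpha>)"
  define S where "S = (\<Sum>j<N. w j)"
  define H where "H = Hfun N \<alpha> v"
  have sumv: "(\<Sum>i<N. v i) = 1" and F: "\<And>i. i < N \<Longrightarrow> Ffun N \<alpha> v i = 0"
    using assms(3) unfolding equilibrium_def simplex_D_def by auto
  have T: "(\<Sum>j<N. Amat i j * vpow \<alpha> v j) = S - w i" if "i < N" for i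
  proof -
    have "(\<Sum>j<N. Amat i j * vpow \<alpha> v j) = (\<Sum>j<N. w j - (if i = j then w j else 0))"
      by (rule sum.cong) (auto simp: Amat_def vpow_def w_def)
    also have "\<dots> = S - w i" using that by (simp add: sum_subtractf S_def)
    finally show ?thesis .
  qed
  have eq: "v i = w i * (S - w i) / H" if "i < N" for i
    using F[OF that] T[OF that] unfolding Ffun_def pifun_def H_def by (simp add: vpow_def w_def)
  have hv: "S * v i powr (\<alpha>-1) - v i powr (2*\<alpha>-1) = H" if "i < N" for i
  proof -
    have vi: "v i > 0" using assms(4) that by auto
    have "H \<noteq> 0" using eq[OF that] vi by auto
    hence "v i * H = w i * (S - w i)" using eq[OF that] by (simp add: field_simps)
    moreover have "w i = v i * v i powr (\<alpha>-1)"
    proof -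
      have "v i * v i powr (\<alpha>-1) = v i powr 1 * v i powr (\<alpha>-1)" using vi by simp
      also have "\<dots> = v i powr (1 + (\<alpha>-1))" by (rule powr_add[symmetric])
      finally show ?thesis by (simp add: w_def)
    qed
    moreover have "w i * w i = v i * v i powr (2*\<alpha>-1)"
    proof -
      have "v i * v i powr (2*\<alpha>-1) = v i powr 1 * v i powr (2*\<alpha>-1)" using vi by simp
      also have "\<dots> = v i powr (1 + (2*\<alpha>-1))" by (rule powr_add[symmetric])
      also have "\<dots> = v i powr (\<alpha> + \<alpha>)" by simp
      also have "\<dots> = w i * w i" unfolding w_def by (rule powr_add)
      finally show ?thesis by simp
    qed
    ultimately have e: "v i * H = S * w i - w i * w i" "S * w i = v i * (S * v i powr (\<alpha>-1))"
      "w i * w i = v i * v i powr (2*\<alpha>-1)"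
      by (simp_all add: algebra_simps)
    hence "v i * H = v i * (S * v i powr (\<alpha>-1) - v i powr (2*\<alpha>-1))"
      by (simp add: right_diff_distrib)
    thus ?thesis using vi by simp
  qed
  define A where "A = v ` {..<N}"
  have finA: "finite A" and neA: "A \<noteq> {}" using assms(1) unfolding A_def by (auto simp: lessThan_empty_iff)
  have Apos: "\<And>x. x \<in> A \<Longrightarrow> x > 0" and Ah: "\<And>x. x \<in> A \<Longrightarrow> S * x powr (\<alpha>-1) - x powr (2*\<alpha>-1) = H"
    using assms(4) hv unfolding A_def by auto
  have le2: "card A \<le> 2"
  proof (rule ccontr)
    assume "\<not> card A \<le> 2"
    hence c3: "card A \<ge> 3" by simp
    define m where "m = Min A"
    define M where "M = Max A"
    have mA: "m \<in> A" and MA: "M \<in> A" using finA neA unfolding m_def M_def by auto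
    have "card (A - {m, M}) \<ge> 1"
    proof -
      have "card A \<le> card (A - {m,M}) + card {m,M}"
        by (metis card_Un_le Un_Diff_cancel2 sup.absorb_iff2 insert_subset mA MA empty_subsetI
              finite.intros le_trans sup_commute card_mono finA finite_Un order_refl)
      moreover have "card {m,M} \<le> 2" by (simp add: card_insert_le_m1)
      ultimately show ?thesis using c3 by linarith
    qed
    then obtain y where y: "y \<in> A" "y \<noteq> m" "y \<noteq> M"
      by (metis Diff_iff card.empty insertCI not_one_le_zero ex_in_conv)
    have "m < y" using y finA unfolding m_def by (metis Min_le order_le_neq_trans)
    moreover have "y < M" using y finA unfolding M_def by (metis Max_ge order_le_neq_trans)
    ultimately show False
      using three_roots[OF assms(2) Apos[OF mA] _ _ Ah[OF mA] Ah[OF y(1)] Ah[OF MA]] by blast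
  qed
  have ge2: "card A \<ge> 2"
  proof (rule ccontr)
    assume "\<not> card A \<ge> 2"
    moreover have "card A \<noteq> 0" using finA neA by simp
    ultimately have "card A = 1" by simp
    then obtain c where Ac: "A = {c}" by (auto simp: card_Suc_eq)
    hence vc: "\<And>i. i < N \<Longrightarrow> v i = c" unfolding A_def by auto
    have "(\<Sum>i<N. v i) = real N * c" using vc by simp
    hence "c = 1 / real N" using sumv assms(1) by (simp add: field_simps)
    thus False using assms(5) vc by auto
  qed
  show ?thesis using le2 ge2 unfolding A_def by simp
qed

end
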